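(* Let $Q=(q_n)_{n\ge1}$ be a basic sequence that is infinite in limit, let $k\in\mathbb{N}$, and let $x=E_0.E_1E_2\cdots$ (w.r.t. $Q$) be $Q$-normal of order $k$. Then there exists a real number $y=F_0.F_1F_2\cdots$ (w.r.t. $Q$) such that the set $\{n : E_n\neq F_n\}$ has natural density zero and $y\notin\bigcup_{j=1}^{\infty}\mathscr{N}_j(Q)$, i.e. $y$ is not $Q$-normal of order $j$ for any $j\ge1$.
   Context: A basic sequence is a sequence $Q=(q_n)_{n\ge1}$ of integers with $q_n\ge2$ for all $n$. The $Q$-Cantor series expansion of a real $x$ is the unique expansion $x=E_0+\sum_{n\ge1}\frac{E_n}{q_1\cdots q_n}$ with $E_0=\lfloor x\rfloor$, $E_n\in\{0,1,\dots,q_n-1\}$ for $n\ge1$, and $E_n\ne q_n-1$ for infinitely many $n$; this is written $x=E_0.E_1E_2\cdots$ w.r.t. $Q$. $Q$ is infinite in limit if $q_n\to\infty$. A block of length $k$ is a $k$-tuple $B=(b_1,\dots,b_k)$ of non-negative integers; $N_n^Q(B,x)$ denotes the number of indices $i\le n$ with $E_i=b_1,E_{i+1}=b_2,\dots,E_{i+k-1}=b_k$. Let $Q_n^{(k)}=\sum_{j=1}^n\frac{1}{q_jq_{j+1}\cdots q_{j+k-1}}$. A real $x$ is $Q$-normal of order $k$ if $\lim_{n\to\infty}N_n^Q(B,x)/Q_n^{(k)}=1$ for every block $B$ of length $k$; $\mathscr{N}_k(Q)$ denotes the set of such $x$. *)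

theory Defs
  imports "HOL-Analysis.Analysis"
begin

text \<open>A basic sequence: q_n \<ge> 2 for all n \<ge> 1 (index 0 is unused).\<close>
definition basic_seq :: "(nat \<Rightarrow> nat) \<Rightarrow> bool" where
  "basic_seq Q \<longleftrightarrow> (\<forall>n\<ge>1. Q n \<ge> 2)"

definition infinite_in_limit :: "(nat \<Rightarrow> nat) \<Rightarrow> bool" where
  "infinite_in_limit Q \<longleftrightarrow> filterlim Q at_top sequentially"

definition is_cantor_expansion :: "(nat \<Rightarrow> nat) \<Rightarrow> real \<Rightarrow> (nat \<Rightarrow> int) \<Rightarrow> bool" where
  "is_cantor_expansion Q x E \<longleftrightarrow>
     E 0 = \<lfloor>x\<rfloor> \<and>
     (\<forall>n\<ge>1. 0 \<le> E n \<and> E n \<le> int (Q n) - 1) \<and>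
     infinite {n. n \<ge> 1 \<and> E n \<noteq> int (Q n) - 1} \<and>
     (\<lambda>n. real_of_int (E (Suc n)) / (\<Prod>i=1..Suc n. real (Q i))) sums (x - real_of_int (E 0))"

definition cantor_digits :: "(nat \<Rightarrow> nat) \<Rightarrow> real \<Rightarrow> nat \<Rightarrow> int" where
  "cantor_digits Q x = (THE E. is_cantor_expansion Q x E)"

definition block_count :: "(nat \<Rightarrow> nat) \<Rightarrow> nat list \<Rightarrow> real \<Rightarrow> nat \<Rightarrow> nat" where
  "block_count Q B x n =
     card {i \<in> {1..n}. \<forall>j<length B. cantor_digits Q x (i + j) = int (B ! j)}"

definition Q_k :: "(nat \<Rightarrow> nat) \<Rightarrow> nat \<Rightarrow> nat \<Rightarrow> real" where
  "Q_k Q k n = (\<Sum>j=1..n. 1 / (\<Prod>i=j..j+k-1. real (Q i)))"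

definition Q_normal_of_order :: "(nat \<Rightarrow> nat) \<Rightarrow> nat \<Rightarrow> real \<Rightarrow> bool" where
  "Q_normal_of_order Q k x \<longleftrightarrow>
     (\<forall>B. length B = k \<longrightarrow>
        (\<lambda>n. real (block_count Q B x n) / Q_k Q k n) \<longlonglongrightarrow> 1)"

definition natural_density_zero :: "nat set \<Rightarrow> bool" where
  "natural_density_zero A \<longleftrightarrow> (\<lambda>n. real (card (A \<inter> {1..n})) / real n) \<longlonglongrightarrow> 0"

end

theory Submission
  imports Defs
begin
definition PP :: "(nat \<Rightarrow> nat) \<Rightarrow> nat \<Rightarrow> real" where
  "PP Q n = (\<Prod>i=1..n. real (Q i))"

fun Acc :: "(nat \<Rightarrow> nat) \<Rightarrow> (nat \<Rightarrow> int) \<Rightarrow> nat \<Rightarrow> int" where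
  "Acc Q E 0 = 0"
| "Acc Q E (Suc n) = int (Q (Suc n)) * Acc Q E n + E (Suc n)"

lemma PP_0[simp]: "PP Q 0 = 1" by (simp add: PP_def)
lemma PP_Suc: "PP Q (Suc n) = PP Q n * real (Q (Suc n))" by (simp add: PP_def)

lemma PP_ge: assumes "basic_seq Q" shows "PP Q n \<ge> 2 ^ n"
proof (induction n)
  case 0 then show ?case by simp
next
  case (Suc n)
  have "Q (Suc n) \<ge> 2" using assms unfolding basic_seq_def by auto
  then have "real (Q (Suc n)) \<ge> 2" by simp
  moreover have "0 \<le> PP Q n" using Suc.IH by (smt (verit) zero_le_power)
  ultimately have "PP Q n * real (Q (Suc n)) \<ge> 2^n * 2"
    using Suc by (intro mult_mono) auto
  then show ?case by (simp add: PP_Suc)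
qed

lemma PP_pos: assumes "basic_seq Q" shows "PP Q n > 0"
  using PP_ge[OF assms, of n] by (smt (verit) zero_less_power)

lemma PP_inv_lim: assumes "basic_seq Q" shows "(\<lambda>n. 1 / PP Q n) \<longlonglongrightarrow> 0"
proof (rule tendsto_sandwich[of "\<lambda>n. 0" _ _ "\<lambda>n. (1/2)^n"])
  show "\<forall>\<^sub>F n in sequentially. 0 \<le> 1 / PP Q n" using PP_pos[OF assms] by (simp add: less_imp_le)
  show "\<forall>\<^sub>F n in sequentially. 1 / PP Q n \<le> (1/2)^n"
  proof (intro always_eventually allI)
    fix n
    have "1 / PP Q n \<le> 1 / 2^n"
      using PP_ge[OF assms, of n] PP_pos[OF assms, of n] by (intro divide_left_mono) auto
    then show "1 / PP Q n \<le> (1/2)^n" by (simp add: power_one_over)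
  qed
  show "(\<lambda>n. (1/2::real)^n) \<longlonglongrightarrow> 0" by (rule LIMSEQ_realpow_zero) auto
qed auto

lemma Acc_partial:
  assumes "basic_seq Q"
  shows "(\<Sum>t<n. real_of_int (E (Suc t)) / PP Q (Suc t)) = real_of_int (Acc Q E n) / PP Q n"
proof (induction n)
  case 0 then show ?case by simp
next
  case (Suc n)
  have p: "PP Q n > 0" using PP_pos[OF assms] by auto
  have q: "real (Q (Suc n)) > 0" using assms unfolding basic_seq_def
    by (metis One_nat_def Suc_le_mono le0 not_numeral_le_zero of_nat_0_less_iff zero_less_iff_neq_zero)
  show ?case using Suc p q by (simp add: PP_Suc field_simps)
qed

definition digits_ok :: "(nat \<Rightarrow> nat) \<Rightarrow> (nat \<Rightarrow> int) \<Rightarrow> bool" where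
  "digits_ok Q E \<longleftrightarrow> (\<forall>n\<ge>1. 0 \<le> E n \<and> E n \<le> int (Q n) - 1) \<and>
     infinite {n. n \<ge> 1 \<and> E n \<noteq> int (Q n) - 1}"

definition rr :: "(nat \<Rightarrow> nat) \<Rightarrow> (nat \<Rightarrow> int) \<Rightarrow> nat \<Rightarrow> real" where
  "rr Q E n = (real_of_int (Acc Q E n) + 1) / PP Q n"

lemma rr_step:
  assumes "basic_seq Q" "\<forall>n\<ge>1. 0 \<le> E n \<and> E n \<le> int (Q n) - 1"
  shows "rr Q E (Suc n) \<le> rr Q E n"
    and "E (Suc n) \<noteq> int (Q (Suc n)) - 1 \<Longrightarrow> rr Q E (Suc n) < rr Q E n"
    and "E (Suc n) = int (Q (Suc n)) - 1 \<Longrightarrow> rr Q E (Suc n) = rr Q E n"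
proof -
  have p: "PP Q n > 0" using PP_pos[OF assms(1)] by auto
  have q: "real (Q (Suc n)) > 0" using assms unfolding basic_seq_def
    by (metis One_nat_def Suc_le_mono le0 not_numeral_le_zero of_nat_0_less_iff zero_less_iff_neq_zero)
  have e: "E (Suc n) \<le> int (Q (Suc n)) - 1" using assms(2) by auto
  have key: "rr Q E (Suc n) = (real (Q (Suc n)) * (real_of_int (Acc Q E n)) + real_of_int (E (Suc n)) + 1) / (PP Q n * real (Q (Suc n)))"
    by (simp add: rr_def PP_Suc)
  have rn: "rr Q E n = (real (Q (Suc n)) * (real_of_int (Acc Q E n) + 1)) / (PP Q n * real (Q (Suc n)))"
    using q by (simp add: rr_def)
  have e': "real_of_int (E (Suc n)) \<le> real (Q (Suc n)) - 1" using e
    by (metis of_int_diff of_int_le_iff of_int_of_nat_eq of_int_1)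
  show "rr Q E (Suc n) \<le> rr Q E n" unfolding key rn
    using p q e' by (intro divide_right_mono) (auto simp: algebra_simps)
  show "E (Suc n) \<noteq> int (Q (Suc n)) - 1 \<Longrightarrow> rr Q E (Suc n) < rr Q E n"
  proof -
    assume ne: "E (Suc n) \<noteq> int (Q (Suc n)) - 1"
    then have "E (Suc n) \<le> int (Q (Suc n)) - 2" using e by auto
    then have e'': "real_of_int (E (Suc n)) \<le> real (Q (Suc n)) - 2"
      by (metis of_int_diff of_int_le_iff of_int_of_nat_eq of_int_numeral)
    show ?thesis unfolding key rn
      using p q e'' by (intro divide_strict_right_mono) (auto simp: algebra_simps)
  qed
  show "E (Suc n) = int (Q (Suc n)) - 1 \<Longrightarrow> rr Q E (Suc n) = rr Q E n"
    unfolding key rn by (simp add: algebra_simps)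
qed

lemma rr_mono:
  assumes "basic_seq Q" "\<forall>n\<ge>1. 0 \<le> E n \<and> E n \<le> int (Q n) - 1" "n \<le> m"
  shows "rr Q E m \<le> rr Q E n"
proof -
  have "antimono_on UNIV (rr Q E)" by (rule decseq_SucI) (rule rr_step(1)[OF assms(1,2)])
  then show ?thesis using assms(3) by (simp add: antimonoD)
qed

lemma tail_lemma:
  assumes Q: "basic_seq Q" and D: "digits_ok Q E"
  defines "f \<equiv> (\<lambda>t. real_of_int (E (Suc t)) / PP Q (Suc t))"
  shows "summable f" "\<And>n. real_of_int (Acc Q E n) \<le> PP Q n * suminf f"
        "\<And>n. PP Q n * suminf f < real_of_int (Acc Q E n) + 1"
proof -
  have bnd: "\<forall>n\<ge>1. 0 \<le> E n \<and> E n \<le> int (Q n) - 1" using D by (simp add: digits_ok_def)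
  have inf: "infinite {n. n \<ge> 1 \<and> E n \<noteq> int (Q n) - 1}" using D by (simp add: digits_ok_def)
  have pp: "\<And>n. PP Q n > 0" using PP_pos[OF Q] by auto
  have f0: "\<And>t. 0 \<le> f t" unfolding f_def using bnd pp by (simp add: less_imp_le)
  have ps: "\<And>n. sum f {..<n} = real_of_int (Acc Q E n) / PP Q n"
    unfolding f_def by (rule Acc_partial[OF Q])
  have s_lt_r: "\<And>n. sum f {..<n} < rr Q E n"
    using pp by (simp add: ps rr_def divide_strict_right_mono)
  have s_mono: "\<And>m n. m \<le> n \<Longrightarrow> sum f {..<m} \<le> sum f {..<n}"
    using f0 by (intro sum_mono2) auto
  have s_le_r: "\<And>m n. sum f {..<m} \<le> rr Q E n"
  proof -
    fix m n
    have "sum f {..<m} \<le> sum f {..<max m n}" by (rule s_mono) auto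
    also have "\<dots> \<le> rr Q E (max m n)" using s_lt_r less_imp_le by blast
    also have "\<dots> \<le> rr Q E n" by (rule rr_mono[OF Q bnd]) auto
    finally show "sum f {..<m} \<le> rr Q E n" .
  qed
  show sm: "summable f" using f0 s_le_r by (intro summableI_nonneg_bounded) auto
  have sup_le: "\<And>n. suminf f \<le> rr Q E n" using sm s_le_r by (intro suminf_le_const) auto
  fix n
  have "sum f {..<n} \<le> suminf f" using sm f0 by (intro sum_le_suminf) auto
  then show "real_of_int (Acc Q E n) \<le> PP Q n * suminf f"
    using pp[of n] by (simp add: ps field_simps)
  obtain N where N: "N > n" "N \<ge> 1" "E N \<noteq> int (Q N) - 1"
  proof -
    from inf obtain N where "N \<in> {n. n \<ge> 1 \<and> E n \<noteq> int (Q n) - 1}" "N > n"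
      using infinite_nat_iff_unbounded by blast
    then show ?thesis using that by auto
  qed
  obtain M where M: "N = Suc M" using N by (cases N) auto
  have "suminf f \<le> rr Q E N" by (rule sup_le)
  also have "\<dots> < rr Q E M" using rr_step(2)[OF Q bnd, of M] N M by auto
  also have "\<dots> \<le> rr Q E n" using N M by (intro rr_mono[OF Q bnd]) auto
  finally have "suminf f < rr Q E n" .
  then show "PP Q n * suminf f < real_of_int (Acc Q E n) + 1"
    using pp[of n] by (simp add: rr_def field_simps)
qed

lemma expansion_digits_ok:
  assumes "is_cantor_expansion Q x E" shows "digits_ok Q E"
  using assms unfolding is_cantor_expansion_def digits_ok_def by auto

lemma PP_eq: "(\<Prod>i=1..n. real (Q i)) = PP Q n" by (simp add: PP_def)

lemma expansion_floor:
  assumes Q: "basic_seq Q" and X: "is_cantor_expansion Q x E"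
  shows "\<lfloor>PP Q n * (x - real_of_int (E 0))\<rfloor> = Acc Q E n"
proof -
  define f where "f \<equiv> (\<lambda>t. real_of_int (E (Suc t)) / PP Q (Suc t))"
  have "f sums (x - real_of_int (E 0))" using X unfolding is_cantor_expansion_def f_def PP_eq by auto
  then have eq: "x - real_of_int (E 0) = suminf f" by (simp add: sums_iff)
  show ?thesis unfolding eq f_def using tail_lemma[OF Q expansion_digits_ok[OF X]]
    by (simp add: floor_eq_iff)
qed

lemma expansion_unique:
  assumes Q: "basic_seq Q" and X: "is_cantor_expansion Q x E" and X': "is_cantor_expansion Q x E'"
  shows "E = E'"
proof
  fix n
  have e0: "E 0 = E' 0" using X X' by (simp add: is_cantor_expansion_def)
  have A: "Acc Q E m = Acc Q E' m" for m
    using expansion_floor[OF Q X, of m] expansion_floor[OF Q X', of m] e0 by simp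
  show "E n = E' n"
  proof (cases n)
    case 0 then show ?thesis using e0 by simp
  next
    case (Suc m)
    have "E (Suc m) = Acc Q E (Suc m) - int (Q (Suc m)) * Acc Q E m" by simp
    also have "\<dots> = Acc Q E' (Suc m) - int (Q (Suc m)) * Acc Q E' m" by (simp only: A)
    also have "\<dots> = E' (Suc m)" by simp
    finally show ?thesis using Suc by simp
  qed
qed

lemma make_expansion:
  assumes Q: "basic_seq Q" and D: "digits_ok Q F"
  shows "is_cantor_expansion Q (real_of_int (F 0) + (\<Sum>t. real_of_int (F (Suc t)) / PP Q (Suc t))) F"
proof -
  define f where "f \<equiv> (\<lambda>t. real_of_int (F (Suc t)) / PP Q (Suc t))"
  note T = tail_lemma[OF Q D, folded f_def]
  have "0 \<le> suminf f" "suminf f < 1" using T(2)[of 0] T(3)[of 0] by auto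
  then have fl: "\<lfloor>real_of_int (F 0) + suminf f\<rfloor> = F 0" by (simp add: floor_eq_iff)
  show ?thesis
    unfolding is_cantor_expansion_def PP_eq f_def[symmetric]
    using D fl summable_sums[OF T(1)] by (simp add: digits_ok_def)
qed

lemma expansion_exists:
  assumes Q: "basic_seq Q"
  shows "\<exists>E. is_cantor_expansion Q x E"
proof -
  define u where "u = x - real_of_int \<lfloor>x\<rfloor>"
  have u: "0 \<le> u" "u < 1" unfolding u_def by linarith+
  define A where "A n = \<lfloor>PP Q n * u\<rfloor>" for n
  define E where "E n = (if n = 0 then \<lfloor>x\<rfloor> else A n - int (Q n) * A (n - 1))" for n
  have pp: "\<And>n. PP Q n > 0" using PP_pos[OF Q] by auto
  have qpos: "\<And>n. n \<ge> 1 \<Longrightarrow> real (Q n) > 0" using Q unfolding basic_seq_def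
    by (metis not_numeral_le_zero of_nat_0_less_iff zero_less_iff_neq_zero)
  have AccA: "Acc Q E n = A n" for n
  proof (induction n)
    case 0 then show ?case using u by (simp add: A_def floor_eq_iff)
  next
    case (Suc n) then show ?case by (simp add: E_def)
  qed
  have bnd: "\<forall>n\<ge>1. 0 \<le> E n \<and> E n \<le> int (Q n) - 1"
  proof (intro allI impI)
    fix n :: nat assume n: "n \<ge> 1"
    then obtain m where m: "n = Suc m" by (cases n) auto
    define t where "t = PP Q m * u"
    have A1: "A n = \<lfloor>real (Q n) * t\<rfloor>" unfolding A_def t_def m by (simp add: PP_Suc algebra_simps)
    have A0: "A (n-1) = \<lfloor>t\<rfloor>" unfolding A_def t_def m by simp
    have qn: "real (Q n) > 0" using qpos n by auto
    have lo: "int (Q n) * \<lfloor>t\<rfloor> \<le> \<lfloor>real (Q n) * t\<rfloor>"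
      using qn by (simp add: le_floor_iff mult_left_mono)
    have "real (Q n) * t < real (Q n) * (real_of_int \<lfloor>t\<rfloor> + 1)"
      using qn by (intro mult_strict_left_mono) (auto simp: real_of_int_floor_add_one_gt)
    then have hi: "\<lfloor>real (Q n) * t\<rfloor> < int (Q n) * (\<lfloor>t\<rfloor> + 1)"
      by (simp add: floor_less_iff)
    show "0 \<le> E n \<and> E n \<le> int (Q n) - 1"
      using n lo hi unfolding E_def A1 A0 by (auto simp: algebra_simps)
  qed
  have ps: "\<And>n. (\<Sum>t<n. real_of_int (E (Suc t)) / PP Q (Suc t)) = real_of_int (A n) / PP Q n"
    using Acc_partial[OF Q] AccA by simp
  have conv: "(\<lambda>n. real_of_int (A n) / PP Q n) \<longlonglongrightarrow> u"
  proof (rule tendsto_sandwich[of "\<lambda>n. u - 1 / PP Q n" _ _ "\<lambda>n. u"])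
    show "\<forall>\<^sub>F n in sequentially. u - 1 / PP Q n \<le> real_of_int (A n) / PP Q n"
    proof (intro always_eventually allI)
      fix n
      have h: "PP Q n * u - 1 \<le> real_of_int (A n)" unfolding A_def by linarith
      have "u - 1 / PP Q n = (PP Q n * u - 1) / PP Q n" using pp[of n] by (simp add: field_simps)
      also have "\<dots> \<le> real_of_int (A n) / PP Q n" using pp[of n] h by (intro divide_right_mono) auto
      finally show "u - 1 / PP Q n \<le> real_of_int (A n) / PP Q n" .
    qed
    show "\<forall>\<^sub>F n in sequentially. real_of_int (A n) / PP Q n \<le> u"
    proof (intro always_eventually allI)
      fix n
      have "real_of_int (A n) \<le> PP Q n * u" unfolding A_def by linarith
      then show "real_of_int (A n) / PP Q n \<le> u" using pp[of n]
        by (simp add: field_simps)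
    qed
    show "(\<lambda>n. u - 1 / PP Q n) \<longlonglongrightarrow> u"
      using tendsto_diff[OF tendsto_const PP_inv_lim[OF Q], of u] by simp
  qed simp
  have sums: "(\<lambda>t. real_of_int (E (Suc t)) / PP Q (Suc t)) sums u"
    unfolding sums_def ps using conv .
  have inf: "infinite {n. n \<ge> 1 \<and> E n \<noteq> int (Q n) - 1}"
  proof
    assume fin: "finite {n. n \<ge> 1 \<and> E n \<noteq> int (Q n) - 1}"
    then obtain N0 where "\<forall>n\<in>{n. n \<ge> 1 \<and> E n \<noteq> int (Q n) - 1}. n \<le> N0"
      using finite_nat_set_iff_bounded_le by blast
    then have N0: "\<And>n. n > N0 \<Longrightarrow> E n = int (Q n) - 1"
    proof -
      fix n assume b: "\<forall>n\<in>{n. n \<ge> 1 \<and> E n \<noteq> int (Q n) - 1}. n \<le> N0" and n: "n > N0"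
      show "E n = int (Q n) - 1"
      proof (rule ccontr)
        assume "E n \<noteq> int (Q n) - 1"
        moreover have "1 \<le> n" using n by simp
        ultimately have "n \<in> {n. n \<ge> 1 \<and> E n \<noteq> int (Q n) - 1}" by blast
        then have "n \<le> N0" using b by blast
        then show False using n by simp
      qed
    qed
    define N where "N = Suc N0"
    have req: "rr Q E n = rr Q E N" if "n \<ge> N" for n
      using that
    proof (induction n rule: dec_induct)
      case base then show ?case by simp
    next
      case (step n)
      have "rr Q E (Suc n) = rr Q E n" using rr_step(3)[OF Q bnd, of n] N0[of "Suc n"] step N_def by auto
      then show ?case using step by simp
    qed
    have lim: "(\<lambda>n. rr Q E N - 1 / PP Q n) \<longlonglongrightarrow> rr Q E N"
      using tendsto_diff[OF tendsto_const PP_inv_lim[OF Q], of "rr Q E N"] by simp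
    have "rr Q E N \<le> u"
    proof (rule LIMSEQ_le_const2[OF lim], intro exI allI impI)
      fix n assume n: "n \<ge> N"
      have "rr Q E N - 1 / PP Q n = real_of_int (A n) / PP Q n"
        using req[OF n] pp[of n] by (simp add: rr_def AccA field_simps)
      also have "\<dots> \<le> u" using pp[of n] unfolding A_def
        by (simp add: divide_le_eq mult.commute)
      finally show "rr Q E N - 1 / PP Q n \<le> u" .
    qed
    then have "real_of_int (A N) + 1 \<le> PP Q N * u" using pp[of N]
      by (simp add: rr_def AccA field_simps)
    then show False unfolding A_def by linarith
  qed
  have "is_cantor_expansion Q x E"
    unfolding is_cantor_expansion_def PP_eq using bnd inf sums
    by (simp add: E_def u_def)
  then show ?thesis by blast
qed

lemma cantor_digits_eq:
  assumes "basic_seq Q" "is_cantor_expansion Q x E"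
  shows "cantor_digits Q x = E"
  unfolding cantor_digits_def
  using assms expansion_unique by (intro the_equality) auto

definition gg :: "(nat \<Rightarrow> nat) \<Rightarrow> nat \<Rightarrow> nat" where
  "gg Q m = (SOME G. \<forall>i\<ge>G. 8 * m \<le> Q i)"

fun cc :: "(nat \<Rightarrow> nat) \<Rightarrow> nat \<Rightarrow> nat" where
  "cc Q 0 = 0"
| "cc Q (Suc m) = 2 * cc Q m + 2 * (m + 1) * (2 * gg Q (Suc m) + m + 2)"

definition LL :: "(nat \<Rightarrow> nat) \<Rightarrow> nat \<Rightarrow> nat" where
  "LL Q m = cc Q m div m"

definition RR :: "(nat \<Rightarrow> nat) \<Rightarrow> nat \<Rightarrow> nat set" where
  "RR Q m = {cc Q m..<cc Q m + LL Q m}"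

definition SS :: "(nat \<Rightarrow> nat) \<Rightarrow> nat set" where
  "SS Q = (\<Union>m\<in>{1..}. RR Q m)"

lemma gg_prop:
  assumes "infinite_in_limit Q" shows "\<forall>i\<ge>gg Q m. 8 * m \<le> Q i"
proof -
  have "eventually (\<lambda>i. 8 * m \<le> Q i) sequentially"
    using assms unfolding infinite_in_limit_def filterlim_at_top by auto
  then have "\<exists>G. \<forall>i\<ge>G. 8 * m \<le> Q i" by (simp add: eventually_sequentially)
  then show ?thesis unfolding gg_def by (rule someI_ex)
qed

lemma cc_Suc_ge: "cc Q (Suc m) \<ge> 2 * cc Q m" by simp
lemma cc_Suc_gt: "cc Q (Suc m) > cc Q m" by simp
lemma cc_mono: "m \<le> n \<Longrightarrow> cc Q m \<le> cc Q n"
  by (induction n rule: dec_induct) (auto intro: order.trans[OF _ less_imp_le[OF cc_Suc_gt]])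
lemma cc_ge_id: "cc Q m \<ge> m"
  by (induction m) (auto intro: Suc_leI order.strict_trans1[OF _ cc_Suc_gt])
lemma cc_big: "m \<ge> 1 \<Longrightarrow> cc Q m \<ge> 2 * m * (2 * gg Q m + m + 1)"
  by (cases m) auto

lemma cc_sum: "(\<Sum>m\<le>K. cc Q m) \<le> 2 * cc Q K"
  by (induction K) (auto simp del: cc.simps intro: order.trans[OF _ cc_Suc_ge] add_mono)

lemma cc_sum_le: "(\<Sum>m\<in>{m. cc Q m \<le> n}. cc Q m) \<le> 2 * n"
proof -
  define K where "K = Max {m. cc Q m \<le> n}"
  have fin: "finite {m. cc Q m \<le> n}"
    by (rule finite_subset[of _ "{..n}"]) (auto intro: order.trans[OF cc_ge_id])
  have ne: "0 \<in> {m. cc Q m \<le> n}" by simp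
  have K: "cc Q K \<le> n" using Max_in[OF fin] ne unfolding K_def by blast
  have "{m. cc Q m \<le> n} = {..K}"
  proof
    show "{m. cc Q m \<le> n} \<subseteq> {..K}" using Max_ge[OF fin] unfolding K_def by auto
    show "{..K} \<subseteq> {m. cc Q m \<le> n}" using K cc_mono by (auto intro: order.trans)
  qed
  then show ?thesis using cc_sum[of Q K] K by simp
qed

lemma card_SS_bound:
  assumes M: "M \<ge> 1"
  shows "real (card (SS Q \<inter> {1..n})) \<le> real (\<Sum>m\<in>{1..<M}. LL Q m) + 2 * real n / real M"
proof -
  define A where "A = (\<Union>m\<in>{1..<M}. RR Q m)"
  define I where "I = {m. M \<le> m \<and> cc Q m \<le> n}"
  define B where "B = (\<Union>m\<in>I. RR Q m)"
  have finI: "finite I"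
    by (rule finite_subset[of _ "{..n}"]) (auto simp: I_def intro: order.trans[OF cc_ge_id])
  have sub: "SS Q \<inter> {1..n} \<subseteq> A \<union> B"
  proof
    fix i assume i: "i \<in> SS Q \<inter> {1..n}"
    then obtain m where m: "m \<ge> 1" "i \<in> RR Q m" unfolding SS_def by auto
    show "i \<in> A \<union> B"
    proof (cases "m < M")
      case True then show ?thesis using m unfolding A_def by auto
    next
      case False
      then have "m \<in> I" using m i unfolding I_def RR_def by auto
      then show ?thesis using m unfolding B_def by auto
    qed
  qed
  have cA: "card A \<le> (\<Sum>m\<in>{1..<M}. LL Q m)"
    unfolding A_def using card_UN_le[of "{1..<M}" "RR Q"] by (simp add: RR_def)
  have cB: "card B \<le> (\<Sum>m\<in>I. LL Q m)"
    unfolding B_def using card_UN_le[OF finI, of "RR Q"] by (simp add: RR_def)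
  have "M * (\<Sum>m\<in>I. LL Q m) = (\<Sum>m\<in>I. M * LL Q m)" by (simp add: sum_distrib_left)
  also have "\<dots> \<le> (\<Sum>m\<in>I. cc Q m)"
  proof (rule sum_mono)
    fix m assume "m \<in> I"
    then have "M \<le> m" unfolding I_def by auto
    then have "M * LL Q m \<le> m * (cc Q m div m)" unfolding LL_def by simp
    also have "\<dots> \<le> cc Q m" by simp
    finally show "M * LL Q m \<le> cc Q m" .
  qed
  also have "\<dots> \<le> (\<Sum>m\<in>{m. cc Q m \<le> n}. cc Q m)"
    by (rule sum_mono2) (auto simp: I_def intro: finite_subset[of _ "{..n}"] order.trans[OF cc_ge_id])
  also have "\<dots> \<le> 2 * n" by (rule cc_sum_le)
  finally have "M * card B \<le> 2 * n" using cB
    by (meson le_trans mult_le_mono2)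
  then have "real M * real (card B) \<le> 2 * real n" by (metis of_nat_le_iff of_nat_mult of_nat_numeral)
  then have cB': "real (card B) \<le> 2 * real n / real M" using M by (simp add: field_simps)
  have finA: "finite A" unfolding A_def RR_def by auto
  have finB: "finite B" unfolding B_def RR_def using finI by auto
  have "card (SS Q \<inter> {1..n}) \<le> card (A \<union> B)" using sub finA finB by (intro card_mono) auto
  also have "\<dots> \<le> card A + card B" by (rule card_Un_le)
  finally have "real (card (SS Q \<inter> {1..n})) \<le> real (card A) + real (card B)" by linarith
  then show ?thesis using cA cB' by linarith
qed

lemma SS_density: "natural_density_zero (SS Q)"
  unfolding natural_density_zero_def
proof (rule LIMSEQ_I)
  fix r :: real assume r: "r > 0"
  obtain M :: nat where M: "M > 4 / r" using reals_Archimedean2 by blast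
  have M1: "M \<ge> 1" using M r
    by (metis less_one not_le of_nat_0 order.strict_trans zero_less_divide_iff zero_less_numeral not_less_iff_gr_or_eq)
  define C where "C = real (\<Sum>m\<in>{1..<M}. LL Q m)"
  obtain N :: nat where N: "N > 2 * C / r" using reals_Archimedean2 by blast
  have "\<forall>n\<ge>Suc N. norm (real (card (SS Q \<inter> {1..n})) / real n - 0) < r"
  proof (intro allI impI)
    fix n assume n: "n \<ge> Suc N"
    have npos: "real n > 0" using n by simp
    have C0: "C \<ge> 0" unfolding C_def by (rule of_nat_0_le_iff)
    have b: "real (card (SS Q \<inter> {1..n})) \<le> C + 2 * real n / real M"
      using card_SS_bound[OF M1] unfolding C_def by blast
    have "real (card (SS Q \<inter> {1..n})) / real n \<le> (C + 2 * real n / real M) / real n"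
      using b npos by (intro divide_right_mono) auto
    also have "\<dots> = C / real n + 2 / real M" using npos by (simp add: field_simps)
    also have "\<dots> < r / 2 + r / 2"
    proof (rule add_less_le_mono)
      have "real n > 2 * C / r" using N n by linarith
      then have "real n * r > 2 * C" using r by (simp add: field_simps)
      then show "C / real n < r / 2" using npos by (simp add: field_simps)
      have "real M * r > 4" using M r by (simp add: field_simps)
      then show "2 / real M \<le> r / 2" using M1 by (simp add: field_simps)
    qed
    finally show "norm (real (card (SS Q \<inter> {1..n})) / real n - 0) < r" by simp
  qed
  then show "\<exists>no. \<forall>n\<ge>no. norm (real (card (SS Q \<inter> {1..n})) / real n - 0) < r" by blast
qed

lemma density_subset:
  assumes "natural_density_zero A" "B \<subseteq> A"
  shows "natural_density_zero B"
  unfolding natural_density_zero_def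
proof (rule tendsto_sandwich[of "\<lambda>n. 0" _ _ "\<lambda>n. real (card (A \<inter> {1..n})) / real n"])
  show "\<forall>\<^sub>F n in sequentially. 0 \<le> real (card (B \<inter> {1..n})) / real n" by simp
  show "\<forall>\<^sub>F n in sequentially. real (card (B \<inter> {1..n})) / real n \<le> real (card (A \<inter> {1..n})) / real n"
  proof (intro always_eventually allI)
    fix n
    have "card (B \<inter> {1..n}) \<le> card (A \<inter> {1..n})" using assms(2) by (intro card_mono) auto
    then show "real (card (B \<inter> {1..n})) / real n \<le> real (card (A \<inter> {1..n})) / real n"
      by (intro divide_right_mono) auto
  qed
  show "(\<lambda>n. real (card (A \<inter> {1..n})) / real n) \<longlonglongrightarrow> 0" using assms(1) by (simp add: natural_density_zero_def)
qed auto

lemma Q_ge1: "basic_seq Q \<Longrightarrow> i \<ge> 1 \<Longrightarrow> real (Q i) \<ge> 2"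
  unfolding basic_seq_def by (metis of_nat_le_iff of_nat_numeral)

lemma block_prod_ge:
  assumes Q: "basic_seq Q" and s: "s \<ge> 1" and j: "j \<ge> 1"
  shows "(\<Prod>i=s..s+j-1. real (Q i)) \<ge> real (Q s)"
proof -
  have "(\<Prod>i=s..s+j-1. real (Q i)) = real (Q s) * (\<Prod>i=Suc s..s+j-1. real (Q i))"
    using j by (intro prod.atLeast_Suc_atMost) auto
  moreover have "(\<Prod>i=Suc s..s+j-1. real (Q i)) \<ge> 1"
  proof (rule prod_ge_1)
    fix x assume "x \<in> {Suc s..s+j-1}"
    then have "x \<ge> 1" by simp
    from Q_ge1[OF Q this] show "1 \<le> real (Q x)" by linarith
  qed
  moreover have "real (Q s) \<ge> 0" by simp
  ultimately show ?thesis by (metis mult_left_mono mult.right_neutral)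
qed

lemma Qk_pos:
  assumes Q: "basic_seq Q" and j: "j \<ge> 1" and n: "n \<ge> 1"
  shows "Q_k Q j n > 0"
  unfolding Q_k_def
proof (rule sum_pos)
  show "finite {1..n}" by simp
  show "{1..n} \<noteq> {}" using n by simp
  fix s assume s: "s \<in> {1..n}"
  have "(\<Prod>i=s..s+j-1. real (Q i)) \<ge> 2"
    using block_prod_ge[OF Q _ j, of s] Q_ge1[OF Q, of s] s by auto
  then show "0 < 1 / (\<Prod>i=s..s+j-1. real (Q i))" by simp
qed

lemma Qk_bound:
  assumes Q: "basic_seq Q" and j: "j \<ge> 1" and m: "m \<ge> 1" and G: "\<forall>i\<ge>G. 8 * m \<le> Q i"
  shows "Q_k Q j n \<le> real G + real n / (8 * real m)"
proof -
  define f where "f s = 1 / (\<Prod>i=s..s+j-1. real (Q i))" for s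
  have f1: "f s \<le> 1" if "s \<ge> 1" for s
  proof -
    have "(\<Prod>i=s..s+j-1. real (Q i)) \<ge> 2"
      using block_prod_ge[OF Q that j] Q_ge1[OF Q that] by auto
    then show ?thesis unfolding f_def by simp
  qed
  have f2: "f s \<le> 1 / (8 * real m)" if "s \<ge> 1" "s \<ge> G" for s
  proof -
    have "real (Q s) \<ge> 8 * real m" using G that by (metis of_nat_le_iff of_nat_mult of_nat_numeral)
    then have "(\<Prod>i=s..s+j-1. real (Q i)) \<ge> 8 * real m"
      using block_prod_ge[OF Q that(1) j] by linarith
    then show ?thesis unfolding f_def using m by (intro divide_left_mono) auto
  qed
  have split: "{1..n} = {s\<in>{1..n}. s < G} \<union> {s\<in>{1..n}. G \<le> s}" by auto
  have "Q_k Q j n = sum f {1..n}" unfolding Q_k_def f_def by simp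
  also have "\<dots> \<le> sum f {s\<in>{1..n}. s < G} + sum f {s\<in>{1..n}. G \<le> s}"
    by (subst split, rule eq_refl, rule sum.union_disjoint) auto
  also have "\<dots> \<le> real G + real n / (8 * real m)"
  proof (rule add_mono)
    have "sum f {s\<in>{1..n}. s < G} \<le> sum (\<lambda>_. 1) {s\<in>{1..n}. s < G}"
      using f1 by (intro sum_mono) auto
    also have "\<dots> = real (card {s\<in>{1..n}. s < G})" by simp
    also have "\<dots> \<le> real G"
    proof -
      have "card {s\<in>{1..n}. s < G} \<le> card {..<G}" by (intro card_mono) auto
      then show ?thesis by simp
    qed
    finally show "sum f {s\<in>{1..n}. s < G} \<le> real G" .
    have "sum f {s\<in>{1..n}. G \<le> s} \<le> sum (\<lambda>_. 1 / (8 * real m)) {s\<in>{1..n}. G \<le> s}"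
      using f2 by (intro sum_mono) auto
    also have "\<dots> = real (card {s\<in>{1..n}. G \<le> s}) / (8 * real m)" by simp
    also have "\<dots> \<le> real n / (8 * real m)"
    proof -
      have "card {s\<in>{1..n}. G \<le> s} \<le> card {1..n}" by (intro card_mono) auto
      then show ?thesis using m by (intro divide_right_mono) auto
    qed
    finally show "sum f {s\<in>{1..n}. G \<le> s} \<le> real n / (8 * real m)" .
  qed
  finally show ?thesis .
qed

lemma run_count:
  assumes Q: "basic_seq Q" and QL: "infinite_in_limit Q" and j: "j \<ge> 1" and m: "m \<ge> j"
    and Fz: "\<And>i. i \<in> SS Q \<Longrightarrow> F i = 0"
  defines "n \<equiv> cc Q m + LL Q m - 1"
  shows "real (card {i \<in> {1..n}. \<forall>t<j. F (i + t) = 0}) \<ge> 2 * Q_k Q j n" "n \<ge> m" 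
proof -
  have m1: "m \<ge> 1" using j m by simp
  define c where "c = cc Q m"
  define L where "L = LL Q m"
  define g where "g = gg Q m"
  have cbig: "c \<ge> 2 * m * (2 * g + m + 1)" using cc_big[OF m1] unfolding c_def g_def by simp
  have cL: "m * L + m > c"
  proof -
    have "c mod m < m" using m1 by simp
    moreover have "m * (c div m) + c mod m = c" by simp
    ultimately show ?thesis unfolding L_def LL_def c_def[symmetric] by linarith
  qed
  have Lle: "L \<le> c" unfolding L_def LL_def c_def by simp
  have Lm: "L \<ge> m"
  proof -
    have "c \<ge> m * (m + 1)" using cbig by (simp add: algebra_simps)
    then have "m * (m+1) < m * L + m" using cL by linarith
    then have "m * m < m * L" by (simp add: algebra_simps)
    then have "m < L" by simp
    then show ?thesis by simp
  qed
  have c1: "c \<ge> 1" using cc_ge_id[where Q=Q and m=m] m1 unfolding c_def by simp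
  have ndef: "n = c + L - 1" unfolding n_def c_def L_def by simp
  have sub: "{c..c + L - j} \<subseteq> {i \<in> {1..n}. \<forall>t<j. F (i + t) = 0}"
  proof
    fix i assume i: "i \<in> {c..c + L - j}"
    have "\<forall>t<j. F (i + t) = 0"
    proof (intro allI impI)
      fix t assume t: "t < j"
      have RRe: "RR Q m = {c..<c+L}" by (simp add: RR_def c_def L_def)
      have "i + t \<in> {c..<c+L}" using i t j Lm m by auto
      then have "i + t \<in> RR Q m" using RRe by simp
      then have "i + t \<in> SS Q" unfolding SS_def using m1 by auto
      then show "F (i + t) = 0" by (rule Fz)
    qed
    moreover have "i \<in> {1..n}" using i c1 j ndef Lm m by auto
    ultimately show "i \<in> {i \<in> {1..n}. \<forall>t<j. F (i + t) = 0}" by blast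
  qed
  have "card {c..c + L - j} \<le> card {i \<in> {1..n}. \<forall>t<j. F (i + t) = 0}"
    using sub by (intro card_mono) auto
  moreover have "card {c..c + L - j} = L - j + 1" using Lm m by simp
  ultimately have cnt: "real (L - j + 1) \<le> real (card {i \<in> {1..n}. \<forall>t<j. F (i + t) = 0})" by simp
  have Qb: "Q_k Q j n \<le> real g + real n / (8 * real m)"
    unfolding g_def by (rule Qk_bound[OF Q j m1 gg_prop[OF QL]])
  have rm: "real m \<ge> 1" using m1 by simp
  have "real n \<le> 2 * real c" using ndef Lle by simp
  then have "real n / (8 * real m) \<le> 2 * real c / (8 * real m)" using rm by (intro divide_right_mono) auto
  then have Qb2: "2 * Q_k Q j n \<le> 2 * real g + real c / (2 * real m)" using Qb by (simp add: field_simps)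
  have "c + 1 \<le> m * L + m" using cL by simp
  then have "real (c + 1) \<le> real (m * L + m)" by (rule of_nat_mono)
  then have cL': "real m * real L + real m \<ge> real c + 1" by simp
  have "real (2 * m * (2 * g + m + 1)) \<le> real c" using cbig by (rule of_nat_mono)
  then have cb': "real c \<ge> 2 * real m * (2 * real g + real m + 1)" by (simp add: algebra_simps)
  have "real c / (2 * real m) \<ge> 2 * real g + real m + 1" using cb' rm by (simp add: field_simps)
  moreover have "real L \<ge> real c / real m - 1" using cL' rm by (simp add: field_simps)
  moreover have "real (L - j + 1) = real L - real j + 1" using Lm m by simp
  moreover have "real c / real m = 2 * (real c / (2 * real m))" by simp
  moreover have "real j \<le> real m" using m by simp
  ultimately have "real (L - j + 1) \<ge> 2 * real g + real c / (2 * real m)"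
    by linarith
  then show "real (card {i \<in> {1..n}. \<forall>t<j. F (i + t) = 0}) \<ge> 2 * Q_k Q j n" using cnt Qb2 by linarith
  show "n \<ge> m" using ndef Lm c1 by simp
qed

theorem theorem3p1:
  fixes Q :: "nat \<Rightarrow> nat" and k :: nat and x :: real
  assumes "basic_seq Q" and "infinite_in_limit Q" and "k \<ge> 1"
    and "Q_normal_of_order Q k x"
  shows "\<exists>y::real.
           natural_density_zero {n. cantor_digits Q x n \<noteq> cantor_digits Q y n} \<and>
           (\<forall>j\<ge>1. \<not> Q_normal_of_order Q j y)"
proof -
  note Q = assms(1) and QL = assms(2)
  obtain E where XE: "is_cantor_expansion Q x E" using expansion_exists[OF Q] by blast
  have cx: "cantor_digits Q x = E" by (rule cantor_digits_eq[OF Q XE])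
  define F where "F n = (if n \<in> SS Q then 0 else E n)" for n
  have DE: "digits_ok Q E" by (rule expansion_digits_ok[OF XE])
  have DF: "digits_ok Q F"
    unfolding digits_ok_def
  proof
    show "\<forall>n\<ge>1. 0 \<le> F n \<and> F n \<le> int (Q n) - 1"
      using DE Q unfolding digits_ok_def basic_seq_def F_def by auto
    have "{n. n \<ge> 1 \<and> E n \<noteq> int (Q n) - 1} \<subseteq> {n. n \<ge> 1 \<and> F n \<noteq> int (Q n) - 1}"
    proof
      fix n assume n: "n \<in> {n. n \<ge> 1 \<and> E n \<noteq> int (Q n) - 1}"
      then have "Q n \<ge> 2" using Q unfolding basic_seq_def by auto
      then show "n \<in> {n. n \<ge> 1 \<and> F n \<noteq> int (Q n) - 1}" using n unfolding F_def by auto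
    qed
    then show "infinite {n. n \<ge> 1 \<and> F n \<noteq> int (Q n) - 1}"
      using DE unfolding digits_ok_def using infinite_super by blast
  qed
  define y where "y = real_of_int (F 0) + (\<Sum>t. real_of_int (F (Suc t)) / PP Q (Suc t))"
  have cy: "cantor_digits Q y = F" unfolding y_def
    by (rule cantor_digits_eq[OF Q make_expansion[OF Q DF]])
  have dens: "natural_density_zero {n. cantor_digits Q x n \<noteq> cantor_digits Q y n}"
    unfolding cx cy by (rule density_subset[OF SS_density]) (auto simp: F_def)
  have notn: "\<not> Q_normal_of_order Q j y" if j: "j \<ge> 1" for j
  proof
    assume "Q_normal_of_order Q j y"
    then have lim: "(\<lambda>n. real (block_count Q (replicate j 0) y n) / Q_k Q j n) \<longlonglongrightarrow> 1"
      unfolding Q_normal_of_order_def by auto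
    have "eventually (\<lambda>n. real (block_count Q (replicate j 0) y n) / Q_k Q j n < 3/2) sequentially"
      by (rule order_tendstoD(2)[OF lim]) simp
    then obtain N where N: "\<And>n. n \<ge> N \<Longrightarrow> real (block_count Q (replicate j 0) y n) / Q_k Q j n < 3/2"
      by (auto simp: eventually_sequentially)
    define m where "m = max j N"
    have Fz: "\<And>i. i \<in> SS Q \<Longrightarrow> F i = 0" by (simp add: F_def)
    define n where "n = cc Q m + LL Q m - 1"
    note RC = run_count[OF Q QL j _ Fz, of m, folded n_def]
    have nm: "n \<ge> m" using RC(2) m_def by simp
    have bc: "block_count Q (replicate j 0) y n = card {i \<in> {1..n}. \<forall>t<j. F (i + t) = 0}"
      unfolding block_count_def cy by simp
    have pos: "Q_k Q j n > 0" using Qk_pos[OF Q j] nm j m_def by simp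
    have "real (block_count Q (replicate j 0) y n) \<ge> 2 * Q_k Q j n"
      using RC(1) m_def bc by simp
    then have "real (block_count Q (replicate j 0) y n) / Q_k Q j n \<ge> 2"
      using pos by (simp add: field_simps)
    moreover have "n \<ge> N" using nm m_def by simp
    ultimately show False using N[of n] by linarith
  qed
  show ?thesis using dens notn by blast
qed

end
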